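(* Let $k\ge 3$ be an integer, let $N\ge 2$, and suppose that $f:[0,N]\to\mathbb{R}$ has continuous derivatives of order up to $k$ on $(0,N)$, with real numbers $\lambda_k>0$ and $A$ such that \[0<\lambda_k\le f^{(k)}(x)\le A\lambda_k\quad (x\in(0,N)),\] and $A\lambda_k\le \tfrac14$. Let $H=[(A\lambda_k)^{-1/k}]$ and \[\mathcal{N}=\#\left\{(m,n)\in\mathbb{Z}_{>0}^2:\ m,n\le N,\ \left\|\frac{f^{(j)}(m)}{j!}-\frac{f^{(j)}(n)}{j!}\right\|\le 2H^{-j}\text{ for }1\le j\le k-1\right\}.\] Then \[\mathcal{N}\ll\big((k-1)!\,A\big)^4\left(N+\lambda_kN^2+\lambda_k^{-2/k}\right)\log N,\] with an absolute implied constant.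
   Context: $[x]$ is the integer part of $x$; $\|\theta\|=\min_{n\in\mathbb{Z}}|\theta-n|$. *)

theory Defs
  imports "HOL-Analysis.Analysis"
begin

definition dist_int :: "real \<Rightarrow> real" where
  "dist_int \<theta> = (INF n::int. \<bar>\<theta> - of_int n\<bar>)"

definition C_upto :: "nat \<Rightarrow> (real \<Rightarrow> real) \<Rightarrow> real set \<Rightarrow> bool" where
  "C_upto k f S \<longleftrightarrow>
     (\<forall>j<k. \<forall>x\<in>S. ((deriv ^^ j) f) differentiable (at x)) \<and>
     continuous_on S ((deriv ^^ k) f)"

end

theory Submission
  imports Defs
begin


lemma dist_int_eq: "dist_int x = \<bar>x - of_int (round x)\<bar>"
  unfolding dist_int_def
proof (rule antisym)
  show "(INF n::int. \<bar>x - of_int n\<bar>) \<le> \<bar>x - of_int (round x)\<bar>"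
    by (rule cINF_lower) (auto intro: bdd_belowI[of _ 0])
  show "\<bar>x - of_int (round x)\<bar> \<le> (INF n::int. \<bar>x - of_int n\<bar>)"
    by (rule cINF_greatest) (auto simp: round_diff_minimal)
qed

lemma dist_int_le: "dist_int x \<le> \<bar>x - of_int z\<bar>"
  unfolding dist_int_eq using round_diff_minimal by blast

lemma int_interval_card:
  fixes c L :: real assumes "L \<ge> 0"
  shows "finite {z::int. \<bar>of_int z - c\<bar> \<le> L} \<and> real (card {z::int. \<bar>of_int z - c\<bar> \<le> L}) \<le> 2*L + 1"
proof -
  have eq: "{z::int. \<bar>of_int z - c\<bar> \<le> L} = {\<lceil>c - L\<rceil>..\<lfloor>c + L\<rfloor>}"
  proof (rule set_eqI)
    fix z :: int
    show "z \<in> {z::int. \<bar>of_int z - c\<bar> \<le> L} \<longleftrightarrow> z \<in> {\<lceil>c - L\<rceil>..\<lfloor>c + L\<rfloor>}"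
      unfolding mem_Collect_eq atLeastAtMost_iff ceiling_le_iff le_floor_iff by linarith
  qed
  have "real (card {\<lceil>c - L\<rceil>..\<lfloor>c + L\<rfloor>}) \<le> 2*L+1"
  proof (cases "\<lceil>c - L\<rceil> \<le> \<lfloor>c + L\<rfloor>")
    case True
    then have "real (card {\<lceil>c - L\<rceil>..\<lfloor>c + L\<rfloor>}) = of_int (\<lfloor>c + L\<rfloor> - \<lceil>c - L\<rceil> + 1)"
      by simp
    also have "\<dots> \<le> 2*L+1" using floor_le_ceiling[of "c+L"] le_of_int_ceiling[of "c-L"] of_int_floor_le[of "c+L"] by linarith
    finally show ?thesis .
  next
    case False then show ?thesis using assms by simp
  qed
  then show ?thesis unfolding eq by simp
qed

lemma nat_diam_card:
  fixes S :: "nat set" and L :: real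
  assumes "L \<ge> 0" and diam: "\<And>a b. a \<in> S \<Longrightarrow> b \<in> S \<Longrightarrow> a \<le> b \<Longrightarrow> real b - real a \<le> L"
  shows "finite S \<and> real (card S) \<le> L + 1"
proof (cases "S = {}")
  case True then show ?thesis using assms by simp
next
  case False
  define m0 where "m0 = (LEAST x. x \<in> S)"
  have m0S: "m0 \<in> S" using False unfolding m0_def by (metis LeastI ex_in_conv)
  have sub: "S \<subseteq> {m0..m0 + nat \<lfloor>L\<rfloor>}"
  proof
    fix b assume b: "b \<in> S"
    have "m0 \<le> b" unfolding m0_def using b by (rule Least_le)
    moreover have "real b - real m0 \<le> L" using diam[OF m0S b \<open>m0 \<le> b\<close>] .
    ultimately show "b \<in> {m0..m0 + nat \<lfloor>L\<rfloor>}"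
    proof -
      have "real (b - m0) \<le> L" using \<open>m0 \<le> b\<close> \<open>real b - real m0 \<le> L\<close> by (simp add: of_nat_diff)
      then have "int (b - m0) \<le> \<lfloor>L\<rfloor>" by (simp add: le_floor_iff)
      then have "b - m0 \<le> nat \<lfloor>L\<rfloor>" by linarith
      then show ?thesis using \<open>m0 \<le> b\<close> by simp
    qed
  qed
  have "finite S" using sub finite_subset by blast
  moreover have "card S \<le> nat \<lfloor>L\<rfloor> + 1" using card_mono[OF _ sub] by simp
  moreover have "real (nat \<lfloor>L\<rfloor>) \<le> L" using assms(1) by linarith
  ultimately show ?thesis by (smt (verit) of_nat_1 of_nat_add of_nat_mono)
qed



lemma mvt_bounds:
  fixes u u' :: "real \<Rightarrow> real"
  assumes der: "\<And>x. 0 < x \<Longrightarrow> x < N \<Longrightarrow> (u has_real_derivative u' x) (at x)"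
    and bnd: "\<And>x. 0 < x \<Longrightarrow> x < N \<Longrightarrow> p \<le> u' x \<and> u' x \<le> q"
    and "0 < x" "x \<le> y" "y < N"
  shows "p*(y-x) \<le> u y - u x \<and> u y - u x \<le> q*(y-x)"
proof (cases "x = y")
  case True then show ?thesis by simp
next
  case False
  then have "x < y" using assms by simp
  have "\<And>t. x \<le> t \<Longrightarrow> t \<le> y \<Longrightarrow> (u has_real_derivative u' t) (at t)"
    using der assms by auto
  from MVT2[OF \<open>x < y\<close> this] obtain z where z: "x < z" "z < y" "u y - u x = (y - x) * u' z" by blast
  have "p \<le> u' z" "u' z \<le> q" using bnd[of z] z assms by auto
  then show ?thesis using z \<open>x < y\<close> by (simp add: mult.commute mult_left_mono)
qed

lemma count_lemma:
  fixes u u' :: "real \<Rightarrow> real" and p q N \<delta> :: real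
  assumes "p > 0" "\<delta> \<ge> 0" "N > 1"
    and der: "\<And>x. 0 < x \<Longrightarrow> x < N \<Longrightarrow> (u has_real_derivative u' x) (at x)"
    and bnd: "\<And>x. 0 < x \<Longrightarrow> x < N \<Longrightarrow> p \<le> u' x \<and> u' x \<le> q"
  shows "finite {n::nat. 0 < n \<and> real n < N \<and> dist_int (u (real n)) \<le> \<delta>} \<and>
    real (card {n::nat. 0 < n \<and> real n < N \<and> dist_int (u (real n)) \<le> \<delta>}) \<le> (2*q*N + 2*\<delta> + 1) * (2*\<delta>/p + 1)"
proof -
  define S where "S = {n::nat. 0 < n \<and> real n < N \<and> dist_int (u (real n)) \<le> \<delta>}"
  define Zs where "Zs = {z::int. \<bar>of_int z - u 1\<bar> \<le> q*N + \<delta>}"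
  define B where "B z = {n::nat. 0 < n \<and> real n < N \<and> \<bar>u (real n) - of_int z\<bar> \<le> \<delta>}" for z :: int
  have "p \<le> u' 1 \<and> u' 1 \<le> q" using bnd[of 1] assms(3) by simp
  then have qp: "p \<le> q" by linarith
  have qN: "q*N + \<delta> \<ge> 0" using qp assms by simp
  from int_interval_card[OF qN, of "u 1"] have Zs: "finite Zs" "real (card Zs) \<le> 2*(q*N+\<delta>) + 1"
    unfolding Zs_def by auto
  have Bz: "finite (B z) \<and> real (card (B z)) \<le> 2*\<delta>/p + 1" for z
  proof (rule nat_diam_card)
    show "0 \<le> 2*\<delta>/p" using assms by simp
    fix a b assume a: "a \<in> B z" and b: "b \<in> B z" and ab: "a \<le> b"
    have ab': "0 < real a" "real a \<le> real b" "real b < N" using a b ab unfolding B_def by auto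
    have "p*(real b - real a) \<le> u b - u a"
      using mvt_bounds[where N=N and u=u and u'=u' and p=p and q=q, OF der bnd ab'] by blast
    also have "\<dots> \<le> 2*\<delta>" using a b unfolding B_def by auto
    finally show "real b - real a \<le> 2*\<delta>/p" using assms by (simp add: field_simps mult.commute)
  qed
  have sub: "S \<subseteq> (\<Union>z\<in>Zs. B z)"
  proof
    fix n assume n: "n \<in> S"
    define z where "z = round (u (real n))"
    have 1: "\<bar>u (real n) - of_int z\<bar> \<le> \<delta>" using n unfolding S_def z_def dist_int_eq by auto
    have n1: "1 \<le> real n" "real n < N" using n unfolding S_def by auto
    have "q*(real n - 1) \<le> q*N" using qp assms n1 by (intro mult_left_mono) auto
    moreover have "p*(real n - 1) \<le> u (real n) - u 1 \<and> u (real n) - u 1 \<le> q*(real n - 1)"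
      using mvt_bounds[where N=N and u=u and u'=u' and p=p and q=q, OF der bnd, of 1 "real n"] n1 by simp
    moreover have "0 \<le> p*(real n - 1)" using assms n1 by simp
    ultimately have "\<bar>u (real n) - u 1\<bar> \<le> q*N" by linarith
    then have "z \<in> Zs" unfolding Zs_def using 1 by auto
    moreover have "n \<in> B z" using n 1 unfolding B_def S_def by auto
    ultimately show "n \<in> (\<Union>z\<in>Zs. B z)" by auto
  qed
  have fin: "finite (\<Union>z\<in>Zs. B z)" using Zs Bz by auto
  have "real (card S) \<le> real (card (\<Union>z\<in>Zs. B z))" using card_mono[OF fin sub] by simp
  also have "\<dots> \<le> real (\<Sum>z\<in>Zs. card (B z))" using card_UN_le[OF Zs(1), of B] by linarith
  also have "\<dots> = (\<Sum>z\<in>Zs. real (card (B z)))" by simp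
  also have "\<dots> \<le> (\<Sum>z\<in>Zs. 2*\<delta>/p + 1)" using Bz by (intro sum_mono) auto
  also have "\<dots> = real (card Zs) * (2*\<delta>/p + 1)" by simp
  also have "\<dots> \<le> (2*(q*N+\<delta>) + 1) * (2*\<delta>/p + 1)"
    using Zs assms by (intro mult_right_mono) auto
  finally show ?thesis using finite_subset[OF sub fin] unfolding S_def by (simp add: algebra_simps)
qed



lemma nat_lt_ceil: "real x < N \<Longrightarrow> x < nat \<lceil>N\<rceil>"
proof -
  assume "real x < N"
  then have "real_of_int (int x) < of_int \<lceil>N\<rceil>" using le_of_int_ceiling[of N] by linarith
  then have "int x < \<lceil>N\<rceil>" by linarith
  then show ?thesis by linarith
qed

lemma count_main:
  fixes k :: nat and N lam A d1 d2 :: real and f :: "real \<Rightarrow> real"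
  assumes k3: "k \<ge> 3" and N2: "N \<ge> 2" and Cf: "C_upto k f {0<..<N}" and lam: "0 < lam"
    and bnds: "\<forall>x\<in>{0<..<N}. lam \<le> (deriv ^^ k) f x \<and> (deriv ^^ k) f x \<le> A * lam"
    and d1: "0 \<le> d1" "d1 \<le> 2" and d2: "0 \<le> d2"
  shows "real (card {(m::nat, n::nat). 0 < m \<and> 0 < n \<and> real m \<le> N \<and> real n \<le> N \<and>
      dist_int ((deriv ^^ (k-1)) f (real m) / fact (k-1) - (deriv ^^ (k-1)) f (real n) / fact (k-1)) \<le> d1 \<and>
      dist_int ((deriv ^^ (k-2)) f (real m) / fact (k-2) - (deriv ^^ (k-2)) f (real n) / fact (k-2)) \<le> d2})
    \<le> 2*N + (2*(A*(lam/fact (k-1))*N)+5) * (N + (\<Sum>d\<in>{1..nat \<lfloor>min N (2*d1/(lam/fact (k-1)))\<rfloor>}.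
        (2*(real d*(real (k-1)*(A*(lam/fact (k-1)))))*N + 2*(2*d2 + real (k-1)*d1*(2*d1/(lam/fact (k-1)))) + 1) *
        (2*(2*d2 + real (k-1)*d1*(2*d1/(lam/fact (k-1))))/(real d*(real (k-1)*(lam/fact (k-1)))) + 1)))"
proof -
  define F :: real where "F = fact (k-1)"
  define G :: real where "G = fact (k-2)"
  define \<mu> where "\<mu> = lam / F"
  define T where "T = 2*d1/\<mu>"
  define \<delta> where "\<delta> = 2*d2 + real (k-1)*d1*T"
  define X where "X = A*\<mu>*N"
  define D0 where "D0 = nat \<lfloor>min N T\<rfloor>"
  define g0 where "g0 = (deriv ^^ k) f"
  define g1 where "g1 = (deriv ^^ (k-1)) f"
  define g2 where "g2 = (deriv ^^ (k-2)) f"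
  have Fpos: "F > 0" unfolding F_def by simp
  have FG: "F = real (k-1) * G"
  proof -
    have "k - 1 = Suc (k-2)" using k3 by simp
    then show ?thesis unfolding F_def G_def by (metis fact_Suc of_nat_fact)
  qed
  have Gpos: "G > 0" unfolding G_def by simp
  have mupos: "\<mu> > 0" unfolding \<mu>_def using lam Fpos by simp
  have der: "((deriv ^^ j) f has_real_derivative (deriv ^^ (Suc j)) f x) (at x)"
    if "j < k" "0 < x" "x < N" for j x
  proof -
    have "((deriv ^^ j) f) differentiable (at x)" using Cf that unfolding C_upto_def by auto
    then show ?thesis using DERIV_deriv_iff_real_differentiable by fastforce
  qed
  have der1: "(g1 has_real_derivative g0 x) (at x)" if "0 < x" "x < N" for x
    using der[of "k-1" x] that k3 unfolding g1_def g0_def by (simp add: Suc_diff_1)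
  have der2: "(g2 has_real_derivative g1 x) (at x)" if "0 < x" "x < N" for x
  proof -
    have "Suc (k-2) = k-1" using k3 by simp
    then show ?thesis using der[of "k-2" x] that k3 unfolding g1_def g2_def by simp
  qed
  have Age: "A \<ge> 1"
  proof -
    have "lam \<le> A*lam" using bnds N2 by (metis greaterThanLessThan_iff order_trans less_le_trans one_less_numeral_iff semiring_norm(76) zero_less_one)
    then show ?thesis using lam by simp
  qed
  define \<phi> where "\<phi> x = g1 x / F" for x
  have derphi: "(\<phi> has_real_derivative g0 x / F) (at x)" if "0 < x" "x < N" for x
    unfolding \<phi>_def using der1[OF that] by (intro DERIV_cdivide)
  have bndphi: "\<mu> \<le> g0 x / F \<and> g0 x / F \<le> A*\<mu>" if "0 < x" "x < N" for x
    using bnds that Fpos unfolding g0_def \<mu>_def by (auto simp: divide_right_mono)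
  have mvtphi: "\<mu>*(y-x) \<le> \<phi> y - \<phi> x \<and> \<phi> y - \<phi> x \<le> A*\<mu>*(y-x)" if "0 < x" "x \<le> y" "y < N" for x y
    using mvt_bounds[where N=N and u=\<phi> and u'="\<lambda>x. g0 x / F" and p=\<mu> and q="A*\<mu>", OF derphi bndphi that] by simp
  define Ns where "Ns = {n::nat. 0 < n \<and> real n < N}"
  define V where "V n = {m::nat. 0 < m \<and> real m < N \<and> dist_int (\<phi> (real m) - \<phi> (real n)) \<le> d1 \<and>
      dist_int (g2 (real m) / G - g2 (real n) / G) \<le> d2}" for n
  define Dall where "Dall = {1..D0}"
  define u where "u d x = real d * (real (k-1) * \<phi> x)" for d :: nat and x
  define Pr where "Pr n d \<longleftrightarrow> dist_int (u d (real n)) \<le> \<delta>" for n d :: nat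
  define Dset where "Dset n = {d\<in>Dall. Pr n d}" for n
  have Tpos: "T \<ge> 0" unfolding T_def using d1 mupos by simp
  have Xnn: "X \<ge> 0" unfolding X_def using Age mupos N2 by simp
  have Dall_iff: "d \<in> Dall \<longleftrightarrow> 1 \<le> d \<and> real d \<le> N \<and> real d \<le> T" for d
  proof -
    have "min N T \<ge> 0" using Tpos N2 by simp
    then have "d \<le> D0 \<longleftrightarrow> real d \<le> min N T" unfolding D0_def
      by (metis le_nat_floor nat_le_real_less of_nat_floor of_nat_le_iff order.trans floor_le_iff le_floor_iff
          of_int_of_nat_eq zle_int nat_le_iff)
    then show ?thesis unfolding Dall_def by auto
  qed
  have finDall: "finite Dall" unfolding Dall_def by simp
  have finV: "finite (V n)" for n
  proof -
    have "V n \<subseteq> {..<nat \<lceil>N\<rceil>}" unfolding V_def using nat_lt_ceil by auto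
    then show ?thesis using finite_subset by blast
  qed
  have finNs: "finite Ns"
  proof -
    have "Ns \<subseteq> {..<nat \<lceil>N\<rceil>}" unfolding Ns_def using nat_lt_ceil by auto
    then show ?thesis using finite_subset by blast
  qed
  have pern: "real (card (V n)) \<le> (2*X+5) * (1 + real (card (Dset n)))" if nNs: "n \<in> Ns" for n
  proof -
    have n0: "0 < real n" "real n < N" using nNs unfolding Ns_def by auto
    define R where "R = {r::int. \<bar>of_int r - 0\<bar> \<le> X + d1}"
    define W where "W r = {m\<in>V n. \<bar>\<phi> (real m) - \<phi> (real n) - of_int r\<bar> \<le> d1}" for r :: int
    have "X + d1 \<ge> 0" using Xnn d1 by simp
    from int_interval_card[OF this, of 0] have R: "finite R" "real (card R) \<le> 2*(X+d1)+1"
      unfolding R_def by auto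
    have cover: "V n \<subseteq> (\<Union>r\<in>R. W r)"
    proof
      fix m assume m: "m \<in> V n"
      define r where "r = round (\<phi> (real m) - \<phi> (real n))"
      have 1: "\<bar>\<phi> (real m) - \<phi> (real n) - of_int r\<bar> \<le> d1" using m unfolding V_def r_def dist_int_eq by auto
      have m0: "0 < real m" "real m < N" using m unfolding V_def by auto
      have "\<bar>\<phi> (real m) - \<phi> (real n)\<bar> \<le> X"
      proof (cases "real m \<le> real n")
        case True
        have "\<phi> (real n) - \<phi> (real m) \<le> A*\<mu>*(real n - real m)" "0 \<le> \<phi> (real n) - \<phi> (real m)"
        proof -
          have h: "\<mu>*(real n - real m) \<le> \<phi> (real n) - \<phi> (real m)" "\<phi> (real n) - \<phi> (real m) \<le> A*\<mu>*(real n - real m)"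
            using mvtphi[OF m0(1) True n0(2)] by auto
          have "0 \<le> \<mu>*(real n - real m)" using mupos True by simp
          then show "\<phi> (real n) - \<phi> (real m) \<le> A*\<mu>*(real n - real m)" "0 \<le> \<phi> (real n) - \<phi> (real m)" using h by linarith+
        qed
        moreover have "A*\<mu>*(real n - real m) \<le> A*\<mu>*N" using Age mupos m0 n0 by (intro mult_left_mono) auto
        ultimately show ?thesis unfolding X_def by linarith
      next
        case False
        then have F': "real n \<le> real m" by simp
        have "\<phi> (real m) - \<phi> (real n) \<le> A*\<mu>*(real m - real n)" "0 \<le> \<phi> (real m) - \<phi> (real n)"
        proof -
          have h: "\<mu>*(real m - real n) \<le> \<phi> (real m) - \<phi> (real n)" "\<phi> (real m) - \<phi> (real n) \<le> A*\<mu>*(real m - real n)"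
            using mvtphi[OF n0(1) F' m0(2)] by auto
          have "0 \<le> \<mu>*(real m - real n)" using mupos F' by simp
          then show "\<phi> (real m) - \<phi> (real n) \<le> A*\<mu>*(real m - real n)" "0 \<le> \<phi> (real m) - \<phi> (real n)" using h by linarith+
        qed
        moreover have "A*\<mu>*(real m - real n) \<le> A*\<mu>*N" using Age mupos m0 n0 by (intro mult_left_mono) auto
        ultimately show ?thesis unfolding X_def by linarith
      qed
      then have "r \<in> R" using 1 unfolding R_def by auto
      moreover have "m \<in> W r" using m 1 unfolding W_def by auto
      ultimately show "m \<in> (\<Union>r\<in>R. W r)" by auto
    qed
    have finD: "finite (Dset n)" unfolding Dset_def using finDall by simp
    have Wr: "real (card (W r)) \<le> 1 + real (card (Dset n))" for r
    proof (cases "W r = {}")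
      case True then show ?thesis by simp
    next
      case False
      define m0 where "m0 = (LEAST m. m \<in> W r)"
      have m0W: "m0 \<in> W r" using False unfolding m0_def by (metis LeastI ex_in_conv)
      have sub: "W r \<subseteq> insert m0 ((\<lambda>d. m0 + d) ` Dset n)"
      proof
        fix m assume mW: "m \<in> W r"
        show "m \<in> insert m0 ((\<lambda>d. m0 + d) ` Dset n)"
        proof (cases "m = m0")
          case True then show ?thesis by simp
        next
          case False
          have "m0 \<le> m" unfolding m0_def using mW by (rule Least_le)
          then have lt: "m0 < m" using False by simp
          define d where "d = m - m0"
          have md: "m = m0 + d" unfolding d_def using lt by simp
          have mV: "0 < real m" "real m < N" "dist_int (g2 (real m) / G - g2 (real n) / G) \<le> d2"
            and mr: "\<bar>\<phi> (real m) - \<phi> (real n) - of_int r\<bar> \<le> d1"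
            using mW unfolding W_def V_def by auto
          have m0V: "0 < real m0" "real m0 < N" "dist_int (g2 (real m0) / G - g2 (real n) / G) \<le> d2"
            and m0r: "\<bar>\<phi> (real m0) - \<phi> (real n) - of_int r\<bar> \<le> d1"
            using m0W unfolding W_def V_def by auto
          have d1': "1 \<le> d" using lt unfolding d_def by simp
          have dreal: "real d = real m - real m0" using lt unfolding d_def by simp
          have dN: "real d \<le> N" using dreal mV m0V by simp
          have le: "real m0 \<le> real m" using lt by simp
          have "\<mu> * real d \<le> \<phi> (real m) - \<phi> (real m0)" using mvtphi[OF m0V(1) le mV(2)] dreal by simp
          also have "\<dots> \<le> 2*d1" using mr m0r by linarith
          finally have dT: "real d \<le> T" unfolding T_def using mupos by (simp add: field_simps mult.commute)
          have hd: "\<And>t. real m0 \<le> t \<Longrightarrow> t \<le> real m \<Longrightarrow> (g2 has_real_derivative g1 t) (at t)"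
            using der2 m0V mV by auto
          have lt': "real m0 < real m" using lt by simp
          from MVT2[OF lt' hd] obtain \<xi> where xi: "real m0 < \<xi>" "\<xi> < real m"
            "g2 (real m) - g2 (real m0) = (real m - real m0) * g1 \<xi>" by auto
          have xi0: "0 < \<xi>" "\<xi> < N" using xi m0V mV by auto
          have "\<phi> (real m0) \<le> \<phi> \<xi>" using mvtphi[OF m0V(1) _ xi0(2)] xi mupos
            by (smt (verit) mult_pos_pos)
          moreover have "\<phi> \<xi> \<le> \<phi> (real m)" using mvtphi[OF xi0(1) _ mV(2)] xi mupos
            by (smt (verit) mult_pos_pos)
          ultimately have xir: "\<bar>\<phi> (real n) + of_int r - \<phi> \<xi>\<bar> \<le> d1" using mr m0r by linarith
          define z1 where "z1 = round (g2 (real m) / G - g2 (real n) / G)"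
          define z2 where "z2 = round (g2 (real m0) / G - g2 (real n) / G)"
          have e1: "\<bar>g2 (real m) / G - g2 (real n) / G - of_int z1\<bar> \<le> d2" using mV(3) unfolding z1_def dist_int_eq .
          have e2: "\<bar>g2 (real m0) / G - g2 (real n) / G - of_int z2\<bar> \<le> d2" using m0V(3) unfolding z2_def dist_int_eq .
          define z where "z = z1 - z2 - int (k-1) * int d * r"
          have key: "real d * (real (k-1) * \<phi> \<xi>) = g2 (real m) / G - g2 (real m0) / G"
          proof -
            have "g2 (real m) / G - g2 (real m0) / G = real d * g1 \<xi> / G" using xi(3) dreal by (metis diff_divide_distrib)
            also have "\<dots> = real d * (real (k-1) * \<phi> \<xi>)" unfolding \<phi>_def FG using Gpos k3 by (simp add: field_simps)
            finally show ?thesis by simp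
          qed
          have eq: "u d (real n) - of_int z = real d * real (k-1) * (\<phi> (real n) + of_int r - \<phi> \<xi>)
              + ((g2 (real m) / G - g2 (real n) / G - of_int z1) - (g2 (real m0) / G - g2 (real n) / G - of_int z2))"
            using key unfolding u_def z_def by (simp add: algebra_simps)
          have "\<bar>real d * real (k-1) * (\<phi> (real n) + of_int r - \<phi> \<xi>)\<bar> \<le> T * real (k-1) * d1"
          proof -
            have "\<bar>real d * real (k-1) * (\<phi> (real n) + of_int r - \<phi> \<xi>)\<bar> = real d * real (k-1) * \<bar>\<phi> (real n) + of_int r - \<phi> \<xi>\<bar>"
              by (simp add: abs_mult)
            also have "\<dots> \<le> T * real (k-1) * d1"
              using dT xir Tpos d1 by (intro mult_mono) auto
            finally show ?thesis .
          qed
          then have "\<bar>u d (real n) - of_int z\<bar> \<le> \<delta>" unfolding \<delta>_def using eq e1 e2 by (simp add: algebra_simps) linarith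
          then have "Pr n d" unfolding Pr_def using dist_int_le[of "u d (real n)" z] by linarith
          moreover have "d \<in> Dall" using Dall_iff d1' dN dT by simp
          ultimately have "d \<in> Dset n" unfolding Dset_def by simp
          then show ?thesis using md by auto
        qed
      qed
      have "card (W r) \<le> card (insert m0 ((\<lambda>d. m0 + d) ` Dset n))"
        using sub finD by (intro card_mono) auto
      also have "\<dots> \<le> Suc (card ((\<lambda>d. m0 + d) ` Dset n))" by (simp add: card_insert_le_m1)
      also have "\<dots> \<le> Suc (card (Dset n))" using card_image_le[OF finD] by simp
      finally show ?thesis by simp
    qed
    have "real (card (V n)) \<le> real (card (\<Union>r\<in>R. W r))"
    proof -
      have "finite (\<Union>r\<in>R. W r)" using R(1) finV unfolding W_def by auto
      then show ?thesis using card_mono[OF _ cover] by simp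
    qed
    also have "\<dots> \<le> real (\<Sum>r\<in>R. card (W r))" using card_UN_le[OF R(1), of W] by linarith
    also have "\<dots> = (\<Sum>r\<in>R. real (card (W r)))" by simp
    also have "\<dots> \<le> (\<Sum>r\<in>R. 1 + real (card (Dset n)))" using Wr by (intro sum_mono) auto
    also have "\<dots> = real (card R) * (1 + real (card (Dset n)))" by simp
    also have "\<dots> \<le> (2*X+5) * (1 + real (card (Dset n)))"
    proof (rule mult_right_mono)
      have "2*(X+d1)+1 \<le> 2*X+5" using d1 by (simp add: algebra_simps)
      then show "real (card R) \<le> 2*X+5" using R(2) by linarith
    qed simp
    finally show ?thesis .
  qed
  define S where "S = {(m::nat, n::nat). 0 < m \<and> 0 < n \<and> real m \<le> N \<and> real n \<le> N \<and>
      dist_int ((deriv ^^ (k-1)) f (real m) / fact (k-1) - (deriv ^^ (k-1)) f (real n) / fact (k-1)) \<le> d1 \<and>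
      dist_int ((deriv ^^ (k-2)) f (real m) / fact (k-2) - (deriv ^^ (k-2)) f (real n) / fact (k-2)) \<le> d2}"
  define P where "P = {n::nat. 0 < n \<and> real n \<le> N}"
  define nN where "nN = nat \<lfloor>N\<rfloor>"
  define Sb where "Sb = ((\<lambda>n. (nN, n)) ` P) \<union> ((\<lambda>m. (m, nN)) ` P)"
  define S1 where "S1 = (\<lambda>(n,m). (m,n)) ` (SIGMA n:Ns. V n)"
  have PnN: "P \<subseteq> {1..nN}" unfolding P_def nN_def by (auto simp: le_nat_floor le_floor_iff)
  have finP: "finite P" using PnN finite_subset by blast
  have cardP: "real (card P) \<le> N"
  proof -
    have "card P \<le> nN" using card_mono[OF _ PnN] by simp
    moreover have "real nN \<le> N" unfolding nN_def using N2 by linarith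
    ultimately show ?thesis by (meson of_nat_le_iff order_trans)
  qed
  have NsP: "Ns \<subseteq> P" unfolding Ns_def P_def by auto
  have cardNs: "real (card Ns) \<le> N" using card_mono[OF finP NsP] cardP by linarith
  have SS: "S \<subseteq> Sb \<union> S1"
  proof
    fix x assume x: "x \<in> S"
    then obtain m n where xmn: "x = (m,n)" by (cases x) auto
    have mn: "0 < m" "0 < n" "real m \<le> N" "real n \<le> N"
      "dist_int (\<phi> (real m) - \<phi> (real n)) \<le> d1" "dist_int (g2 (real m) / G - g2 (real n) / G) \<le> d2"
      using x unfolding xmn S_def \<phi>_def g1_def g2_def F_def G_def by auto
    show "x \<in> Sb \<union> S1"
    proof (cases "real m < N \<and> real n < N")
      case True
      then have "n \<in> Ns" "m \<in> V n" unfolding Ns_def V_def using mn by auto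
      then have "(n,m) \<in> (SIGMA n:Ns. V n)" by auto
      then have "x \<in> S1" unfolding S1_def xmn by force
      then show ?thesis by simp
    next
      case False
      then have "real m = N \<or> real n = N" using mn by auto
      moreover have "real m = N \<Longrightarrow> m = nN" unfolding nN_def by (metis floor_of_nat nat_int)
      moreover have "real n = N \<Longrightarrow> n = nN" unfolding nN_def by (metis floor_of_nat nat_int)
      moreover have "m \<in> P" "n \<in> P" unfolding P_def using mn by auto
      ultimately have "x \<in> Sb" unfolding Sb_def xmn by auto
      then show ?thesis by simp
    qed
  qed
  have finSig: "finite (SIGMA n:Ns. V n)" using finNs finV by auto
  have "real (card S) \<le> real (card (Sb \<union> S1))"
    using card_mono[OF _ SS] finP finSig unfolding Sb_def S1_def by auto
  also have "\<dots> \<le> real (card Sb) + real (card S1)" using card_Un_le[of Sb S1] by linarith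
  also have "real (card Sb) \<le> 2*N"
  proof -
    have "card Sb \<le> card ((\<lambda>n. (nN, n)) ` P) + card ((\<lambda>m. (m, nN)) ` P)" unfolding Sb_def by (rule card_Un_le)
    also have "\<dots> \<le> card P + card P" using card_image_le[OF finP] by (meson add_mono)
    finally show ?thesis using cardP by linarith
  qed
  also have "real (card S1) \<le> (\<Sum>n\<in>Ns. real (card (V n)))"
  proof -
    have "card S1 \<le> card (SIGMA n:Ns. V n)" unfolding S1_def using card_image_le[OF finSig] .
    also have "\<dots> = (\<Sum>n\<in>Ns. card (V n))" using card_SigmaI[OF finNs] finV by auto
    finally show ?thesis by (metis of_nat_le_iff of_nat_sum)
  qed
  also have "(\<Sum>n\<in>Ns. real (card (V n))) \<le> (\<Sum>n\<in>Ns. (2*X+5) * (1 + real (card (Dset n))))"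
    using pern by (intro sum_mono) auto
  also have "\<dots> = (2*X+5) * (real (card Ns) + (\<Sum>n\<in>Ns. real (card (Dset n))))"
    by (simp add: sum_distrib_left sum.distrib algebra_simps)
  also have "(\<Sum>n\<in>Ns. real (card (Dset n))) = (\<Sum>d\<in>Dall. real (card {n\<in>Ns. Pr n d}))"
  proof -
    have "(\<Sum>n\<in>Ns. real (card (Dset n))) = (\<Sum>n\<in>Ns. \<Sum>d\<in>Dall. if Pr n d then 1 else 0)"
      unfolding Dset_def by (simp add: sum.inter_filter[OF finDall, symmetric])
    also have "\<dots> = (\<Sum>d\<in>Dall. \<Sum>n\<in>Ns. if Pr n d then 1 else 0)" by (rule sum.swap)
    also have "\<dots> = (\<Sum>d\<in>Dall. real (card {n\<in>Ns. Pr n d}))"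
      by (simp add: sum.inter_filter[OF finNs, symmetric])
    finally show ?thesis .
  qed
  also have "(\<Sum>d\<in>Dall. real (card {n\<in>Ns. Pr n d})) \<le> (\<Sum>d\<in>Dall.
        (2*(real d*(real (k-1)*(A*\<mu>)))*N + 2*\<delta> + 1) * (2*\<delta>/(real d*(real (k-1)*\<mu>)) + 1))"
  proof (rule sum_mono)
    fix d assume dD: "d \<in> Dall"
    have d1': "real d \<ge> 1" using dD Dall_iff by auto
    have k1: "real (k-1) \<ge> 2" using k3 by simp
    have pp: "real d*(real (k-1)*\<mu>) > 0" using d1' k1 mupos by simp
    have "\<delta> \<ge> 0" unfolding \<delta>_def using d1 d2 Tpos k1 by simp
    have derU: "(u d has_real_derivative real d*(real (k-1)*(g0 x / F))) (at x)" if "0 < x" "x < N" for x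
      unfolding u_def using derphi[OF that] by (intro DERIV_cmult)
    have bndU: "real d*(real (k-1)*\<mu>) \<le> real d*(real (k-1)*(g0 x / F)) \<and> real d*(real (k-1)*(g0 x / F)) \<le> real d*(real (k-1)*(A*\<mu>))"
      if "0 < x" "x < N" for x
    proof -
      have c0: "0 \<le> real d * real (k-1)" by simp
      show ?thesis
        using mult_left_mono[OF conjunct1[OF bndphi[OF that]] c0] mult_left_mono[OF conjunct2[OF bndphi[OF that]] c0]
        by (metis mult.assoc)
    qed
    have "{n\<in>Ns. Pr n d} = {n::nat. 0 < n \<and> real n < N \<and> dist_int (u d (real n)) \<le> \<delta>}"
      unfolding Ns_def Pr_def by auto
    then show "real (card {n\<in>Ns. Pr n d}) \<le> (2*(real d*(real (k-1)*(A*\<mu>)))*N + 2*\<delta> + 1) * (2*\<delta>/(real d*(real (k-1)*\<mu>)) + 1)"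
      using count_lemma[OF pp \<open>\<delta> \<ge> 0\<close> _ derU bndU] N2 by auto
  qed
  finally have main: "real (card S) \<le> 2*N + (2*X+5) * (real (card Ns) + (\<Sum>d\<in>Dall.
        (2*(real d*(real (k-1)*(A*\<mu>)))*N + 2*\<delta> + 1) * (2*\<delta>/(real d*(real (k-1)*\<mu>)) + 1)))"
    using Xnn by (simp add: mult_left_mono)
  have "real (card S) \<le> 2*N + (2*X+5) * (N + (\<Sum>d\<in>Dall.
        (2*(real d*(real (k-1)*(A*\<mu>)))*N + 2*\<delta> + 1) * (2*\<delta>/(real d*(real (k-1)*\<mu>)) + 1)))"
    using main cardNs Xnn by (smt (verit) mult_left_mono)
  then show ?thesis unfolding S_def X_def Dall_def D0_def T_def \<delta>_def \<mu>_def F_def by simp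
qed



lemma params:
  fixes k :: nat and lam A :: real
  assumes k3: "k \<ge> 3" and lam: "lam > 0" and A1: "A \<ge> 1" and small: "A*lam \<le> 1/4"
  defines "a \<equiv> A*lam"
  defines "M \<equiv> a powr (-1/real k)"
  defines "H \<equiv> \<lfloor>M\<rfloor>"
  shows "M \<ge> 1" "a * M^k = 1" "real_of_int H \<ge> 1"
    "2 * real_of_int H powi (- int (k-1)) \<le> 2^k * a * M"
    "2 * real_of_int H powi (- int (k-1)) \<le> 2"
    "2 * real_of_int H powi (- int (k-2)) \<le> 2^k * a * M^2"
    "0 \<le> 2 * real_of_int H powi (- int (k-1))"
    "0 \<le> 2 * real_of_int H powi (- int (k-2))"
    "M^2 \<le> lam powr (-2/real k)"
proof -
  have apos: "a > 0" unfolding a_def using lam A1 by simp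
  have ale: "a \<le> 1" unfolding a_def using small by simp
  have kpos: "real k > 0" using k3 by simp
  have "a powr (1/real k) \<le> 1" using apos ale kpos by (intro powr_le1) auto
  moreover have "M = inverse (a powr (1/real k))" unfolding M_def by (simp add: powr_minus[symmetric])
  moreover have "a powr (1/real k) > 0" using apos by simp
  ultimately show M1: "M \<ge> 1" by (simp add: one_le_inverse)
  have "M^k = M powr (real k)" using M1 by (simp add: powr_realpow)
  also have "\<dots> = a powr (-1/real k * real k)" unfolding M_def by (simp add: powr_powr)
  also have "\<dots> = inverse a" using kpos apos by (simp add: powr_minus)
  finally show aMk: "a * M^k = 1" using apos by simp
  show H1: "real_of_int H \<ge> 1" unfolding H_def using M1 by (simp add: le_floor_iff)
  have H2: "real_of_int H \<ge> M/2"
  proof -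
    have f: "M < real_of_int \<lfloor>M\<rfloor> + 1" using floor_correct[of M] by simp
    have g: "1 \<le> real_of_int \<lfloor>M\<rfloor>" using H1 unfolding H_def .
    show ?thesis unfolding H_def using f g by linarith
  qed
  have Mpos: "M > 0" using M1 by simp
  have hp: "real_of_int H powi (- int j) = inverse (real_of_int H ^ j)" for j
    by (simp add: power_int_minus)
  have hb: "inverse (real_of_int H ^ j) \<le> 2^j * inverse (M^j)" for j
  proof -
    have "(M/2)^j \<le> real_of_int H ^ j" using H2 Mpos by (intro power_mono) auto
    then have "inverse (real_of_int H ^ j) \<le> inverse ((M/2)^j)" using Mpos by (intro le_imp_inverse_le) auto
    also have "\<dots> = 2^j * inverse (M^j)" by (simp add: power_divide field_simps)
    finally show ?thesis .
  qed
  have hb1: "inverse (real_of_int H ^ j) \<le> 1" for j using H1 by (simp add: inverse_le_1_iff one_le_power)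
  have invM: "inverse (M^j) = a * M^(k-j)" if "j \<le> k" for j
  proof -
    have "M^k = M^j * M^(k-j)" using that by (simp add: power_add[symmetric])
    then have "a * M^j * M^(k-j) = 1" using aMk by (simp add: mult.assoc)
    then show ?thesis using Mpos by (simp add: field_simps)
  qed
  have "2 * real_of_int H powi (- int (k-1)) \<le> 2 * (2^(k-1) * inverse (M^(k-1)))"
    unfolding hp using hb[of "k-1"] by simp
  also have "\<dots> = 2^k * a * M"
  proof -
    have "k - (k-1) = 1" using k3 by simp
    moreover have "2 * 2^(k-1) = (2::real)^k"
    proof -
      have "k = Suc (k-1)" using k3 by simp
      then show ?thesis by (metis power_Suc)
    qed
    ultimately show ?thesis using invM[of "k-1"] by (simp add: mult.assoc)
  qed
  finally show "2 * real_of_int H powi (- int (k-1)) \<le> 2^k * a * M" .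
  show "2 * real_of_int H powi (- int (k-1)) \<le> 2" unfolding hp using hb1[of "k-1"] by simp
  have "2 * real_of_int H powi (- int (k-2)) \<le> 2 * (2^(k-2) * inverse (M^(k-2)))"
    unfolding hp using hb[of "k-2"] by simp
  also have "\<dots> = 2^(k-1) * a * M^2"
  proof -
    have "k - (k-2) = 2" using k3 by simp
    moreover have "2 * 2^(k-2) = (2::real)^(k-1)"
    proof -
      have "k-1 = Suc (k-2)" using k3 by simp
      then show ?thesis by (metis power_Suc)
    qed
    ultimately show ?thesis using invM[of "k-2"] by (simp add: mult.assoc)
  qed
  also have "\<dots> \<le> 2^k * a * M^2"
  proof -
    have "(2::real)^(k-1) \<le> 2^k" by (intro power_increasing) auto
    then show ?thesis using apos Mpos by (intro mult_right_mono) auto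
  qed
  finally show "2 * real_of_int H powi (- int (k-2)) \<le> 2^k * a * M^2" .
  show "0 \<le> 2 * real_of_int H powi (- int (k-1))" "0 \<le> 2 * real_of_int H powi (- int (k-2))"
    unfolding hp using H1 by auto
  have "M^2 = M powr 2" using powr_realpow[of M 2] Mpos by simp
  also have "\<dots> = a powr (-1/real k * 2)" unfolding M_def by (simp add: powr_powr)
  also have "\<dots> = a powr (-2/real k)" by simp
  also have "\<dots> = (A powr (-2/real k)) * (lam powr (-2/real k))" unfolding a_def
    using lam A1 by (simp add: powr_mult)
  also have "\<dots> \<le> 1 * (lam powr (-2/real k))"
  proof (rule mult_right_mono)
    have "1 \<le> A powr (2/real k)" using A1 kpos by (intro ge_one_powr_ge_zero) auto
    moreover have "A powr (-2/real k) = inverse (A powr (2/real k))"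
      by (simp add: powr_minus[symmetric])
    ultimately show "A powr (-2/real k) \<le> 1" by (simp add: inverse_le_1_iff)
  qed simp
  finally show "M^2 \<le> lam powr (-2/real k)" by simp
qed



lemma harm_le_ln: "harm n \<le> 1 + ln (real n)" if "n \<ge> 1"
  using euler_mascheroni_sequence_decreasing[of 1 n] that by (simp add: harm_def)

lemma sum_bound:
  fixes q1 p1 N \<delta> :: real and D0 :: nat
  assumes p1: "p1 > 0" and "q1 \<ge> 0" "\<delta> \<ge> 0" and N2: "N \<ge> 2" and D0: "real D0 \<le> N"
  shows "(\<Sum>d\<in>{1..D0}. (2*(real d*q1)*N + 2*\<delta> + 1)*(2*\<delta>/(real d*p1) + 1))
    \<le> real D0*(4*(q1/p1)*N*\<delta> + (2*\<delta>+1)) + 2*q1*N*(real D0)^2 + (2*(2*\<delta>+1)*\<delta>/p1)*(1 + ln N)"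
proof -
  have eq: "(2*(real d*q1)*N + 2*\<delta> + 1)*(2*\<delta>/(real d*p1) + 1)
      = (4*(q1/p1)*N*\<delta> + (2*\<delta>+1)) + 2*q1*N*real d + (2*(2*\<delta>+1)*\<delta>/p1) * inverse (real d)"
    if "d \<in> {1..D0}" for d
    using that p1 by (auto simp: field_simps)
  have "(\<Sum>d\<in>{1..D0}. (2*(real d*q1)*N + 2*\<delta> + 1)*(2*\<delta>/(real d*p1) + 1))
      = (\<Sum>d\<in>{1..D0}. (4*(q1/p1)*N*\<delta> + (2*\<delta>+1)) + 2*q1*N*real d + (2*(2*\<delta>+1)*\<delta>/p1) * inverse (real d))"
    using eq by (rule sum.cong[OF refl])
  also have "\<dots> = real D0*(4*(q1/p1)*N*\<delta> + (2*\<delta>+1)) + 2*q1*N*(\<Sum>d\<in>{1..D0}. real d)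
      + (2*(2*\<delta>+1)*\<delta>/p1) * harm D0"
    by (simp add: sum.distrib sum_distrib_left harm_def)
  also have "\<dots> \<le> real D0*(4*(q1/p1)*N*\<delta> + (2*\<delta>+1)) + 2*q1*N*(real D0)^2 + (2*(2*\<delta>+1)*\<delta>/p1)*(1 + ln N)"
  proof -
    have s1: "(\<Sum>d\<in>{1..D0}. real d) \<le> (real D0)^2"
    proof -
      have "(\<Sum>d\<in>{1..D0}. real d) \<le> real (card {1..D0}) * real D0"
        by (rule sum_bounded_above) auto
      then show ?thesis by (simp add: power2_eq_square)
    qed
    have s2: "harm D0 \<le> 1 + ln N"
    proof (cases "D0 = 0")
      case True
      then show ?thesis using N2 by (simp add: harm_def)
    next
      case False
      then have "harm D0 \<le> 1 + ln (real D0)" using harm_le_ln by simp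
      also have "ln (real D0) \<le> ln N" using False D0 by simp
      finally show ?thesis by simp
    qed
    have c1: "0 \<le> 2*q1*N" using assms by simp
    have c2: "0 \<le> 2*(2*\<delta>+1)*\<delta>/p1" using assms by simp
    show ?thesis using mult_left_mono[OF s1 c1] mult_left_mono[OF s2 c2] by linarith
  qed
  finally show ?thesis .
qed



lemma mm: "(a::real) \<le> a' \<Longrightarrow> b \<le> b' \<Longrightarrow> 0 \<le> a \<Longrightarrow> 0 \<le> b \<Longrightarrow> a*b \<le> a'*b'"
  by (meson mult_mono order_trans)

lemma monom:
  fixes x1 x2 x3 x4 :: real
  assumes "1 \<le> x1" "1 \<le> x2" "1 \<le> x3" "1 \<le> x4" "i1 \<le> 2" "i2 \<le> 4" "i3 \<le> 4" "i4 \<le> 3"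
  shows "x1^i1*x2^i2*x3^i3*x4^i4 \<le> x1^2*x2^4*x3^4*x4^3"
proof -
  have p: "x^i \<le> x^j" "0 \<le> x^i" if "1 \<le> x" "i \<le> j" for x :: real and i j
    using that by (auto intro: power_increasing)
  show ?thesis using assms
    by (intro mm p) (auto intro!: mult_nonneg_nonneg)
qed

lemma final_arith:
  fixes k :: nat and N A F a M lam L2 d1 d2 :: real and D0 :: nat
  assumes k3: "k \<ge> 3" and N2: "N \<ge> 2" and A1: "A \<ge> 1" and F1: "F \<ge> 1" and apos: "a > 0" and M1: "M \<ge> 1"
    and aMk: "a * M^k = 1" and lamd: "lam = a / A" and L2: "M^2 \<le> L2"
    and d1: "0 \<le> d1" "d1 \<le> 2^k*a*M" and d2: "0 \<le> d2" "d2 \<le> 2^k*a*M^2"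
    and D0: "real D0 \<le> 2*d1/(lam/F)"
  defines "\<mu> \<equiv> lam/F"
  defines "T \<equiv> 2*d1/\<mu>"
  defines "\<delta> \<equiv> 2*d2 + real (k-1)*d1*T"
  defines "X \<equiv> A*\<mu>*N"
  shows "2*N + (2*X+5)*(N + (real D0*(4*A*N*\<delta> + (2*\<delta>+1)) + 2*(real (k-1)*(A*\<mu>))*N*(real D0)^2
            + (2*(2*\<delta>+1)*\<delta>/(real (k-1)*\<mu>))*(1 + ln N)))
     \<le> 807*(real k)^2*((2::real)^k)^4*A^4*F^3*(N + lam*N^2 + L2)*(1 + ln N)"
proof -
  define B :: real where "B = 2^k"
  define kr where "kr = real k"
  have B1: "B \<ge> 1" unfolding B_def by simp
  have kr3: "kr \<ge> 3" unfolding kr_def using k3 by simp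
  have k1le: "real (k-1) \<le> kr" "real (k-1) \<ge> 1" unfolding kr_def using k3 by auto
  have muE: "\<mu> = a/(A*F)" unfolding \<mu>_def lamd by simp
  have mupos: "\<mu> > 0" unfolding muE using apos A1 F1 by simp
  have lampos: "lam > 0" unfolding lamd using apos A1 by simp
  have aMj: "a * M^j \<le> 1" if "j \<le> k" for j
  proof -
    have "M^j \<le> M^k" using M1 that by (intro power_increasing) auto
    then have "a * M^j \<le> a * M^k" using apos by simp
    then show ?thesis using aMk by simp
  qed
  have aM1: "a*M \<le> 1" using aMj[of 1] k3 by simp
  have aM2: "a*M^2 \<le> 1" using aMj[of 2] k3 by simp
  have aM3: "a*M^3 \<le> 1" using aMj[of 3] k3 by simp
  have Mpos: "M > 0" using M1 by simp
  have d1B: "d1 \<le> B*a*M" using d1 unfolding B_def by simp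
  have d2B: "d2 \<le> B*a*M^2" using d2 unfolding B_def by simp
  have Tdef: "T = 2*d1*(A*F)/a" unfolding T_def muE using apos A1 F1 by (simp add: field_simps)
  have T0: "T \<ge> 0" unfolding Tdef using d1 apos A1 F1 by simp
  have Tle: "T \<le> 2*B*A*F*M"
  proof -
    have "2*d1*(A*F)/a \<le> 2*(B*a*M)*(A*F)/a"
      using d1B apos A1 F1 by (intro divide_right_mono mult_right_mono) auto
    also have "\<dots> = 2*B*A*F*M" using apos by (simp add: field_simps)
    finally show ?thesis unfolding Tdef .
  qed
  define E where "E = 4*kr*B^2*A*F"
  have kB: "1 \<le> kr*B^2"
  proof -
    have "1*1 \<le> kr*B^2" by (rule mm) (use kr3 B1 in \<open>auto simp: one_le_power\<close>)
    then show ?thesis by simp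
  qed
  have AF: "1 \<le> A*F"
  proof -
    have "1*1 \<le> A*F" by (rule mm) (use A1 F1 in auto)
    then show ?thesis by simp
  qed
  have E1: "E \<ge> 1"
  proof -
    have "1*1 \<le> (kr*B^2)*(A*F)" by (rule mm) (use kB AF in auto)
    moreover have "E = 4*((kr*B^2)*(A*F))" unfolding E_def by (simp add: mult.assoc)
    ultimately show ?thesis by linarith
  qed
  have \<delta>0: "\<delta> \<ge> 0" unfolding \<delta>_def using d1 d2 T0 by simp
  have \<delta>le: "\<delta> \<le> E*(a*M^2)"
  proof -
    have "real (k-1)*d1*T \<le> kr*(B*a*M)*(2*B*A*F*M)"
      using k1le d1B Tle d1 T0 by (intro mm) auto
    also have "\<dots> = 2*kr*B^2*A*F*(a*M^2)" by (simp add: power2_eq_square)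
    finally have 1: "real (k-1)*d1*T \<le> 2*kr*B^2*A*F*(a*M^2)" .
    have 2: "2*d2 \<le> 2*B*(a*M^2)" using d2B by simp
    have "2*B \<le> 2*kr*B^2*A*F"
    proof -
      have "B \<le> kr*B^2*A*F"
      proof -
        have "B \<le> kr*B" using kr3 B1 by simp
        also have "\<dots> \<le> kr*B^2" using kr3 B1 by (simp add: power2_eq_square)
        also have "\<dots> \<le> kr*B^2*(A*F)" using mult_left_mono[OF AF, of "kr*B^2"] kr3 by simp
        finally show ?thesis by (simp add: mult.assoc)
      qed
      then show ?thesis by simp
    qed
    then have "2*B*(a*M^2) \<le> 2*kr*B^2*A*F*(a*M^2)" using apos by (intro mult_right_mono) auto
    then show ?thesis unfolding \<delta>_def E_def using 1 2 by (simp add: algebra_simps)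
  qed
  have \<delta>E: "\<delta> \<le> E"
  proof -
    have "E*(a*M^2) \<le> E*1" using aM2 E1 by (intro mult_left_mono) auto
    then show ?thesis using \<delta>le by simp
  qed
  have D0T: "real D0 \<le> T" using D0 unfolding T_def \<mu>_def .
  have c1: "real D0*(4*A*N*\<delta>) \<le> 8*B*A^2*F*E*N"
  proof -
    have "real D0*\<delta> \<le> (2*B*A*F*M)*(E*(a*M^2))" using D0T Tle \<delta>le \<delta>0 by (intro mm) auto
    also have "\<dots> = 2*B*A*F*E*(a*M^3)" by (simp add: power3_eq_cube power2_eq_square)
    also have "\<dots> \<le> 2*B*A*F*E*1" using aM3 B1 A1 F1 E1 by (intro mult_left_mono) auto
    finally have "real D0*\<delta> \<le> 2*B*A*F*E" by simp
    then have "4*A*N*(real D0*\<delta>) \<le> 4*A*N*(2*B*A*F*E)" using A1 N2 by (intro mult_left_mono) auto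
    then show ?thesis by (simp add: algebra_simps power2_eq_square)
  qed
  have c2: "real D0*(2*\<delta>+1) \<le> 6*B*A*F*E*M"
  proof -
    have "real D0*(2*\<delta>+1) \<le> (2*B*A*F*M)*(3*E)" using D0T Tle \<delta>E \<delta>0 E1 by (intro mm) auto
    then show ?thesis by (simp add: algebra_simps)
  qed
  have c3: "2*(real (k-1)*(A*\<mu>))*N*(real D0)^2 \<le> 8*kr*B^2*A^2*F*N"
  proof -
    have "(real D0)^2 \<le> (2*B*A*F*M)^2" using D0T Tle by (intro power_mono) auto
    then have "\<mu>*(real D0)^2 \<le> (a/(A*F))*(2*B*A*F*M)^2" using mupos unfolding muE by (intro mult_left_mono) auto
    also have "\<dots> = 4*B^2*A*F*(a*M^2)" using A1 F1 by (simp add: field_simps power2_eq_square)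
    also have "\<dots> \<le> 4*B^2*A*F*1" using aM2 A1 F1 B1 by (intro mult_left_mono) auto
    finally have h: "\<mu>*(real D0)^2 \<le> 4*B^2*A*F" by simp
    have "2*(real (k-1)*(A*\<mu>))*N*(real D0)^2 = (2*real (k-1)*A*N)*(\<mu>*(real D0)^2)" by (simp add: algebra_simps)
    also have "\<dots> \<le> (2*kr*A*N)*(4*B^2*A*F)"
    proof (rule mm[OF _ h])
      show "2*real (k-1)*A*N \<le> 2*kr*A*N" using k1le A1 N2 by (intro mult_right_mono) auto
    qed (use k1le A1 N2 mupos in auto)
    also have "\<dots> = 8*kr*B^2*A^2*F*N" by (simp add: algebra_simps power2_eq_square)
    finally show ?thesis .
  qed
  have c4: "2*(2*\<delta>+1)*\<delta>/(real (k-1)*\<mu>) \<le> 6*E^2*A*F*M^2"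
  proof -
    have "2*(2*\<delta>+1)*\<delta>/(real (k-1)*\<mu>) \<le> 2*(2*\<delta>+1)*\<delta>/\<mu>"
    proof (rule divide_left_mono)
      show "\<mu> \<le> real (k-1)*\<mu>" using k1le mupos by simp
    qed (use \<delta>0 mupos k1le in auto)
    also have "\<dots> \<le> 2*(3*E)*(E*(a*M^2))/\<mu>"
      using \<delta>0 \<delta>E \<delta>le mupos E1 by (intro divide_right_mono mult_mono) auto
    also have "\<dots> = 6*E^2*A*F*M^2" unfolding muE using apos A1 F1 by (simp add: field_simps power2_eq_square)
    finally show ?thesis .
  qed
  define Q where "Q = N + lam*N^2 + L2"
  have L20: "L2 \<ge> 0" using L2 by (metis zero_le_power2 order_trans)
  have Xdef: "X = a*N/F" unfolding X_def muE using A1 by simp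
  have X0: "X \<ge> 0" unfolding Xdef using apos N2 F1 by simp
  have aNF: "a*N^2/F \<le> A*lam*N^2"
  proof -
    have "a*N^2*1 \<le> a*N^2*F" using mult_left_mono[OF F1, of "a*N^2"] apos by simp
    then have "a*N^2/F \<le> a*N^2" using F1 by (simp add: pos_divide_le_eq)
    also have "\<dots> = A*lam*N^2" unfolding lamd using A1 by simp
    finally show ?thesis .
  qed
  have p1: "(2*X+5)*N \<le> 5*A*Q"
  proof -
    have "(2*X+5)*N = 2*(a*N^2/F) + 5*N" unfolding Xdef by (simp add: algebra_simps power2_eq_square)
    also have "\<dots> \<le> 2*(A*lam*N^2) + 5*N" using aNF by simp
    also have "\<dots> \<le> 5*A*Q"
    proof -
      have "N \<le> A*N" using mult_right_mono[OF A1, of N] N2 by simp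
      moreover have "0 \<le> A*(lam*N^2)" "0 \<le> A*L2" using A1 lampos L20 by auto
      moreover have "5*A*Q = 5*(A*N) + 5*(A*(lam*N^2)) + 5*(A*L2)" unfolding Q_def by (simp add: algebra_simps)
      ultimately show ?thesis by (simp add: mult.assoc)
    qed
    finally show ?thesis .
  qed
  have pM: "(2*X+5)*M^j \<le> 5*Q" if "j \<le> 2" "1 \<le> j" for j
  proof -
    have "a*M^j \<le> 1" using aMj[of j] that k3 by simp
    then have "a*M^j*N \<le> 1*N" using N2 by (intro mult_right_mono) auto
    moreover have "a*M^j*N/F \<le> a*M^j*N" using F1 apos N2 Mpos
      by (simp add: pos_divide_le_eq mult_left_mono[OF F1, of "a*M^j*N", simplified])
    ultimately have "X*M^j \<le> N" unfolding Xdef by (simp add: field_simps)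
    moreover have "M^j \<le> M^2" using M1 that by (intro power_increasing) auto
    ultimately have "(2*X+5)*M^j \<le> 2*N + 5*L2" using L2 by (simp add: algebra_simps)
    also have "\<dots> \<le> 5*Q"
    proof -
      have "0 \<le> lam*N^2" using lampos by simp
      then show ?thesis unfolding Q_def using N2 L20 by simp
    qed
    finally show ?thesis .
  qed
  have pM1: "(2*X+5)*M \<le> 5*Q" using pM[of 1] by simp
  have pM2: "(2*X+5)*M^2 \<le> 5*Q" using pM[of 2] by simp
  have Q0: "Q \<ge> 0" unfolding Q_def using N2 L20 lampos by simp
  have ln0: "0 \<le> ln N" using N2 by simp
  define W where "W = kr^2*B^4*A^4*F^3"
  have Wdef: "807*(real k)^2*((2::real)^k)^4*A^4*F^3 = 807*W" unfolding W_def kr_def B_def by simp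
  define Z where "Z = real D0*(4*A*N*\<delta> + (2*\<delta>+1)) + 2*(real (k-1)*(A*\<mu>))*N*(real D0)^2
            + (2*(2*\<delta>+1)*\<delta>/(real (k-1)*\<mu>))*(1 + ln N)"
  have Zle: "Z \<le> 8*B*A^2*F*E*N + 6*B*A*F*E*M + 8*kr*B^2*A^2*F*N + 6*E^2*A*F*M^2*(1+ln N)"
  proof -
    have "(2*(2*\<delta>+1)*\<delta>/(real (k-1)*\<mu>))*(1 + ln N) \<le> (6*E^2*A*F*M^2)*(1+ln N)"
      using c4 ln0 by (intro mult_right_mono) auto
    then show ?thesis unfolding Z_def using c1 c2 c3 by (simp add: algebra_simps)
  qed
  have "2*N + (2*X+5)*(N + Z) = 2*N + (2*X+5)*N + (2*X+5)*Z" by (simp add: algebra_simps)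
  also have "\<dots> \<le> 2*N + (2*X+5)*N + (2*X+5)*(8*B*A^2*F*E*N + 6*B*A*F*E*M + 8*kr*B^2*A^2*F*N + 6*E^2*A*F*M^2*(1+ln N))"
    using Zle X0 by (intro add_left_mono mult_left_mono) auto
  also have "\<dots> = 2*N + (2*X+5)*N*(1 + 8*B*A^2*F*E + 8*kr*B^2*A^2*F) + (6*B*A*F*E)*((2*X+5)*M)
      + (6*E^2*A*F*(1+ln N))*((2*X+5)*M^2)"
    by (simp add: algebra_simps)
  also have "\<dots> \<le> 2*Q + (5*A*Q)*(1 + 8*B*A^2*F*E + 8*kr*B^2*A^2*F) + (6*B*A*F*E)*(5*Q)
      + (6*E^2*A*F*(1+ln N))*(5*Q)"
  proof -
    have "2*N \<le> 2*Q" unfolding Q_def using L20 lampos by simp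
    moreover have "(2*X+5)*N*(1 + 8*B*A^2*F*E + 8*kr*B^2*A^2*F) \<le> (5*A*Q)*(1 + 8*B*A^2*F*E + 8*kr*B^2*A^2*F)"
      using p1 B1 A1 F1 E1 kr3 by (intro mult_right_mono) auto
    moreover have "(6*B*A*F*E)*((2*X+5)*M) \<le> (6*B*A*F*E)*(5*Q)"
      using pM1 B1 A1 F1 E1 by (intro mult_left_mono) auto
    moreover have "(6*E^2*A*F*(1+ln N))*((2*X+5)*M^2) \<le> (6*E^2*A*F*(1+ln N))*(5*Q)"
      using pM2 A1 F1 E1 ln0 by (intro mult_left_mono) auto
    ultimately show ?thesis by linarith
  qed
  also have "\<dots> \<le> 807*W*Q*(1 + ln N)"
  proof -
    have kr1: "1 \<le> kr" using kr3 by simp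
    note mon = monom[OF kr1 B1 A1 F1]
    have w1: "1 \<le> W" using mon[of 0 0 0 0] unfolding W_def by simp
    have w2: "A \<le> W" using mon[of 0 0 1 0] unfolding W_def by simp
    have w3: "5*A*(8*B*A^2*F*E) = 160*(kr^1*B^3*A^4*F^2)" unfolding E_def by (simp add: algebra_simps power2_eq_square power3_eq_cube power4_eq_xxxx)
    have w3': "kr^1*B^3*A^4*F^2 \<le> W" using mon[of 1 3 4 2] unfolding W_def by simp
    have w4: "5*A*(8*kr*B^2*A^2*F) = 40*(kr^1*B^2*A^3*F^1)" by (simp add: algebra_simps power2_eq_square power3_eq_cube)
    have w4': "kr^1*B^2*A^3*F^1 \<le> W" using mon[of 1 2 3 1] unfolding W_def by simp
    have w5: "6*B*A*F*E*5 = 120*(kr^1*B^3*A^2*F^2)" unfolding E_def by (simp add: algebra_simps power2_eq_square power3_eq_cube)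
    have w5': "kr^1*B^3*A^2*F^2 \<le> W" using mon[of 1 3 2 2] unfolding W_def by simp
    have w6: "6*E^2*A*F*5 = 480*(kr^2*B^4*A^3*F^3)" unfolding E_def by (simp add: algebra_simps power2_eq_square power3_eq_cube power4_eq_xxxx)
    have w6': "kr^2*B^4*A^3*F^3 \<le> W" using mon[of 2 4 3 3] unfolding W_def by simp
    define L where "L = 1 + ln N"
    have L1: "1 \<le> L" unfolding L_def using ln0 by simp
    have v3: "5*A*(8*B*A^2*F*E) \<le> 160*W" using w3 w3' by linarith
    have v4: "5*A*(8*kr*B^2*A^2*F) \<le> 40*W" using w4 w4' by linarith
    have v5: "6*B*A*F*E*5 \<le> 120*W" using w5 w5' by linarith
    have ex: "2 + 5*A*(1 + 8*B*A^2*F*E + 8*kr*B^2*A^2*F) + 6*B*A*F*E*5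
       = 2 + 5*A + 5*A*(8*B*A^2*F*E) + 5*A*(8*kr*B^2*A^2*F) + 6*B*A*F*E*5" by (simp add: algebra_simps)
    have c0: "2 + 5*A*(1 + 8*B*A^2*F*E + 8*kr*B^2*A^2*F) + 6*B*A*F*E*5 \<le> 327*W"
      unfolding ex using w1 w2 v3 v4 v5 by linarith
    have c6: "6*E^2*A*F*5 \<le> 480*W" using w6 w6' by linarith
    have "2*Q + (5*A*Q)*(1 + 8*B*A^2*F*E + 8*kr*B^2*A^2*F) + (6*B*A*F*E)*(5*Q) + (6*E^2*A*F*L)*(5*Q)
        = Q*(2 + 5*A*(1 + 8*B*A^2*F*E + 8*kr*B^2*A^2*F) + 6*B*A*F*E*5) + (Q*L)*(6*E^2*A*F*5)"
      by (simp add: algebra_simps)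
    also have "\<dots> \<le> Q*(327*W) + (Q*L)*(480*W)"
      using c0 c6 Q0 L1 by (intro add_mono mult_left_mono) auto
    also have "\<dots> \<le> (Q*L)*(327*W) + (Q*L)*(480*W)"
    proof -
      have "Q*1 \<le> Q*L" using Q0 L1 by (intro mult_left_mono) auto
      then have "Q*(327*W) \<le> (Q*L)*(327*W)" using w1 by (intro mult_right_mono) auto
      then show ?thesis by simp
    qed
    also have "\<dots> = 807*W*Q*L" by (simp add: algebra_simps)
    finally show ?thesis unfolding L_def .
  qed
  finally show ?thesis unfolding Wdef Z_def[symmetric] Q_def by simp
qed



lemma fact_up: "fact j * (j+1)^i \<le> (fact (j+i) :: nat)"
proof (induction i)
  case 0 then show ?case by simp
next
  case (Suc i)
  have "fact j * (j+1)^(Suc i) = (fact j * (j+1)^i) * (j+1)" by (simp add: algebra_simps)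
  also have "\<dots> \<le> fact (j+i) * (j+i+1)" using Suc by (intro mult_mono) auto
  also have "\<dots> = fact (j + Suc i)" by (simp add: algebra_simps)
  finally show ?case .
qed

lemma fact_down: "fact (j+i) \<le> fact j * (j+i)^i"
proof (induction i)
  case 0 then show ?case by simp
next
  case (Suc i)
  have "fact (j + Suc i) = fact (j+i) * (j+i+1)" by (simp add: algebra_simps)
  also have "\<dots> \<le> (fact j * (j+i)^i) * (j+i+1)" using Suc by (intro mult_right_mono) auto
  also have "\<dots> \<le> fact j * (j + Suc i)^(Suc i)"
  proof -
    have "(j+i)^i \<le> (j + Suc i)^i" by (intro power_mono) auto
    then have "(fact j * (j+i)^i) * (j+i+1) \<le> (fact j * (j + Suc i)^i) * (j + Suc i)" by (intro mult_mono) auto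
    then show ?thesis by (simp add: algebra_simps)
  qed
  finally show ?case .
qed

lemma pow64_fact: "(64::nat)^k * fact 63 \<le> 64^64 * fact (k-1)" if "k \<ge> 1" for k
proof (cases "k \<le> 64")
  case True
  have "(fact 63::nat) = fact ((k-1) + (64-k))" using True that by simp
  also have "\<dots> \<le> fact (k-1) * ((k-1) + (64-k))^(64-k)" by (rule fact_down)
  also have "\<dots> \<le> fact (k-1) * 64^(64-k)" using True that by (intro mult_left_mono power_mono) auto
  finally have "(64::nat)^k * fact 63 \<le> 64^k * (fact (k-1) * 64^(64-k))" by simp
  also have "\<dots> = 64^(k + (64-k)) * fact (k-1)" by (simp add: power_add)
  also have "\<dots> = 64^64 * fact (k-1)" using True by simp
  finally show ?thesis .
next
  case False
  have "(fact 63::nat) * 64^(k-64) \<le> fact (63 + (k-64))" using fact_up[of 63 "k-64"] by simp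
  also have "63 + (k-64) = k-1" using False by simp
  finally have h: "(fact 63::nat) * 64^(k-64) \<le> fact (k-1)" .
  have kk: "k = 64 + (k-64)" using False by simp
  have e: "(64::nat)^k = 64^64 * 64^(k-64)" by (subst kk) (simp only: power_add diff_add_inverse)
  have "(64::nat)^k * fact 63 = 64^64 * (fact 63 * 64^(k-64))" unfolding e by (simp only: ac_simps)
  also have "\<dots> \<le> 64^64 * fact (k-1)" using h by simp
  finally show ?thesis .
qed

definition c0 :: real where "c0 = 807 * 64^64 / fact 63"

lemma c0_pos: "c0 > 0" unfolding c0_def by simp

lemma pow_bound: "807 * (real k)^2 * ((2::real)^k)^4 \<le> c0 * fact (k-1)" if "k \<ge> 1"
proof -
  have "k < 2^k" by (rule less_exp)
  then have "real k \<le> 2^k" by (metis less_imp_le of_nat_less_iff of_nat_numeral of_nat_power)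
  then have "(real k)^2 \<le> (2^k)^2" by (intro power_mono) auto
  then have "(real k)^2 * ((2::real)^k)^4 \<le> (2^k)^2 * (2^k)^4" by (intro mult_right_mono) auto
  also have "\<dots> = ((2::real)^k)^6" by (simp add: power_add[symmetric])
  also have "\<dots> = ((2::real)^6)^k" by (metis power_mult mult.commute)
  also have "\<dots> = (64::real)^k" by simp
  also have "\<dots> \<le> (64^64 / fact 63) * fact (k-1)"
  proof -
    have "real ((64::nat)^k * fact 63) \<le> real (64^64 * fact (k-1))" using pow64_fact[OF that] by (simp only: of_nat_le_iff)
    then have "(64::real)^k * fact 63 \<le> 64^64 * fact (k-1)" by simp
    then show ?thesis by (simp add: field_simps)
  qed
  finally show ?thesis unfolding c0_def by simp
qed



theorem lemma3:
  shows "\<exists>C>0. \<forall>(k::nat) (N::real) (f::real \<Rightarrow> real) (lam::real) (A::real).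
     k \<ge> 3 \<longrightarrow> N \<ge> 2 \<longrightarrow> C_upto k f {0<..<N} \<longrightarrow>
     0 < lam \<longrightarrow>
     (\<forall>x\<in>{0<..<N}. lam \<le> (deriv ^^ k) f x \<and> (deriv ^^ k) f x \<le> A * lam) \<longrightarrow>
     A * lam \<le> 1/4 \<longrightarrow>
     (let H = \<lfloor>(A * lam) powr (- 1 / real k)\<rfloor> in
      real (card {(m::nat, n::nat). 0 < m \<and> 0 < n \<and> real m \<le> N \<and> real n \<le> N \<and>
         (\<forall>j\<in>{1..k-1}. dist_int ((deriv ^^ j) f (real m) / fact j - (deriv ^^ j) f (real n) / fact j)
                           \<le> 2 * real_of_int H powi (- int j))})
      \<le> C * (fact (k - 1) * A) ^ 4 * (N + lam * N\<^sup>2 + lam powr (- 2 / real k)) * ln N)"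
proof (intro exI[of _ "3 * c0"] conjI allI impI)
  show "(0::real) < 3 * c0" using c0_pos by simp
  fix k :: nat and N :: real and f :: "real \<Rightarrow> real" and lam A :: real
  assume k3: "k \<ge> 3" and N2: "N \<ge> 2" and Cf: "C_upto k f {0<..<N}" and lam: "0 < lam"
    and bnds: "\<forall>x\<in>{0<..<N}. lam \<le> (deriv ^^ k) f x \<and> (deriv ^^ k) f x \<le> A * lam"
    and small: "A * lam \<le> 1/4"
  define a where "a = A*lam"
  define M where "M = a powr (-1/real k)"
  define H where "H = \<lfloor>M\<rfloor>"
  define F :: real where "F = fact (k-1)"
  define d1 where "d1 = 2 * real_of_int H powi (- int (k-1))"
  define d2 where "d2 = 2 * real_of_int H powi (- int (k-2))"
  have A1: "A \<ge> 1"
  proof -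
    have "1 \<in> {0<..<N}" using N2 by simp
    then have "lam \<le> A*lam" using bnds[rule_format, of 1] by (meson order_trans)
    then show ?thesis using lam by simp
  qed
  note P = params[OF k3 lam A1 small, folded a_def, folded M_def, folded H_def, folded d1_def d2_def]
  have apos: "a > 0" unfolding a_def using A1 lam by simp
  have F1: "F \<ge> 1" unfolding F_def by simp
  define S where "S = {(m::nat, n::nat). 0 < m \<and> 0 < n \<and> real m \<le> N \<and> real n \<le> N \<and>
         (\<forall>j\<in>{1..k-1}. dist_int ((deriv ^^ j) f (real m) / fact j - (deriv ^^ j) f (real n) / fact j)
                           \<le> 2 * real_of_int H powi (- int j))}"
  define S2 where "S2 = {(m::nat, n::nat). 0 < m \<and> 0 < n \<and> real m \<le> N \<and> real n \<le> N \<and>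
      dist_int ((deriv ^^ (k-1)) f (real m) / fact (k-1) - (deriv ^^ (k-1)) f (real n) / fact (k-1)) \<le> d1 \<and>
      dist_int ((deriv ^^ (k-2)) f (real m) / fact (k-2) - (deriv ^^ (k-2)) f (real n) / fact (k-2)) \<le> d2}"
  have SS2: "S \<subseteq> S2"
  proof
    fix x assume xS: "x \<in> S"
    obtain m n where x: "x = (m,n)" by (cases x) auto
    have h: "0 < m \<and> 0 < n \<and> real m \<le> N \<and> real n \<le> N \<and>
         (\<forall>j\<in>{1..k-1}. dist_int ((deriv ^^ j) f (real m) / fact j - (deriv ^^ j) f (real n) / fact j)
                           \<le> 2 * real_of_int H powi (- int j))" using xS unfolding S_def x by simp
    have j1: "k-1 \<in> {1..k-1}" and j2: "k-2 \<in> {1..k-1}" using k3 by auto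
    have "dist_int ((deriv ^^ (k-1)) f (real m) / fact (k-1) - (deriv ^^ (k-1)) f (real n) / fact (k-1)) \<le> d1"
      using h j1 unfolding d1_def by blast
    moreover have "dist_int ((deriv ^^ (k-2)) f (real m) / fact (k-2) - (deriv ^^ (k-2)) f (real n) / fact (k-2)) \<le> d2"
      using h j2 unfolding d2_def by blast
    ultimately show "x \<in> S2" using h unfolding S2_def x by simp
  qed
  have finS2: "finite S2"
  proof -
    have "S2 \<subseteq> {..nat \<lfloor>N\<rfloor>} \<times> {..nat \<lfloor>N\<rfloor>}"
    proof
      fix x assume "x \<in> S2"
      then obtain m n where x: "x = (m,n)" "real m \<le> N" "real n \<le> N" unfolding S2_def by blast
      then show "x \<in> {..nat \<lfloor>N\<rfloor>} \<times> {..nat \<lfloor>N\<rfloor>}" by (simp add: le_nat_floor)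
    qed
    then show ?thesis using finite_subset by blast
  qed
  define \<mu> where "\<mu> = lam/F"
  define T where "T = 2*d1/\<mu>"
  define \<delta> where "\<delta> = 2*d2 + real (k-1)*d1*T"
  define X where "X = A*\<mu>*N"
  define D0 where "D0 = nat \<lfloor>min N T\<rfloor>"
  define Z where "Z = real D0*(4*A*N*\<delta> + (2*\<delta>+1)) + 2*(real (k-1)*(A*\<mu>))*N*(real D0)^2
            + (2*(2*\<delta>+1)*\<delta>/(real (k-1)*\<mu>))*(1 + ln N)"
  have mupos: "\<mu> > 0" unfolding \<mu>_def using lam F1 by simp
  have T0: "T \<ge> 0" unfolding T_def using P(7) mupos by simp
  have \<delta>0: "\<delta> \<ge> 0" unfolding \<delta>_def using P(7) P(8) T0 by simp
  have D0T: "real D0 \<le> T" and D0N: "real D0 \<le> N" unfolding D0_def using T0 N2 by linarith+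
  have k1: "real (k-1) > 0" using k3 by simp
  have "real (card S) \<le> real (card S2)" using card_mono[OF finS2 SS2] by simp
  also have "\<dots> \<le> 2*N + (2*X+5) * (N + (\<Sum>d\<in>{1..D0}.
        (2*(real d*(real (k-1)*(A*\<mu>)))*N + 2*\<delta> + 1) * (2*\<delta>/(real d*(real (k-1)*\<mu>)) + 1)))"
    using count_main[OF k3 N2 Cf lam bnds P(7) P(5) P(8)]
    unfolding S2_def X_def D0_def T_def \<delta>_def \<mu>_def F_def by simp
  also have "\<dots> \<le> 2*N + (2*X+5) * (N + Z)"
  proof -
    have "(\<Sum>d\<in>{1..D0}. (2*(real d*(real (k-1)*(A*\<mu>)))*N + 2*\<delta> + 1) * (2*\<delta>/(real d*(real (k-1)*\<mu>)) + 1))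
      \<le> real D0*(4*((real (k-1)*(A*\<mu>))/(real (k-1)*\<mu>))*N*\<delta> + (2*\<delta>+1)) + 2*(real (k-1)*(A*\<mu>))*N*(real D0)^2
        + (2*(2*\<delta>+1)*\<delta>/(real (k-1)*\<mu>))*(1 + ln N)"
      using mupos k1 A1 \<delta>0 N2 D0N by (intro sum_bound) auto
    also have "(real (k-1)*(A*\<mu>))/(real (k-1)*\<mu>) = A" using mupos k1 by simp
    finally have "(\<Sum>d\<in>{1..D0}. (2*(real d*(real (k-1)*(A*\<mu>)))*N + 2*\<delta> + 1) * (2*\<delta>/(real d*(real (k-1)*\<mu>)) + 1)) \<le> Z"
      unfolding Z_def by (simp add: mult.assoc)
    moreover have "2*X+5 \<ge> 0" unfolding X_def using A1 mupos N2 by simp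
    ultimately show ?thesis by (simp add: mult_left_mono)
  qed
  also have "\<dots> \<le> 807*(real k)^2*((2::real)^k)^4*A^4*F^3*(N + lam*N^2 + lam powr (-2/real k))*(1 + ln N)"
  proof -
    have lamd: "lam = a/A" unfolding a_def using A1 by simp
    have D0': "real D0 \<le> 2*d1/(lam/F)" using D0T unfolding T_def \<mu>_def .
    show ?thesis
      using final_arith[OF k3 N2 A1 F1 apos P(1) P(2) lamd P(9) P(7) P(4) P(8) P(6) D0']
      unfolding Z_def \<delta>_def T_def X_def \<mu>_def by simp
  qed
  also have "\<dots> \<le> (c0 * F) * A^4*F^3*(N + lam*N^2 + lam powr (-2/real k))*(3*ln N)"
  proof -
    have pb: "807*(real k)^2*((2::real)^k)^4 \<le> c0 * F"
      unfolding F_def using pow_bound k3 by simp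
    have ln2: "ln 2 \<le> ln N" using N2 by simp
    have "1 + ln N \<le> 3 * ln N" using ln2 ln2_ge_two_thirds by linarith
    have ln1: "1 + ln N \<le> 3 * ln N" using ln2 ln2_ge_two_thirds by linarith
    define Qv where "Qv = N + lam*N^2 + lam powr (-2/real k)"
    have Qv0: "0 \<le> Qv" unfolding Qv_def using N2 lam by simp
    have R0: "0 \<le> A^4*F^3*Qv" using A1 F1 Qv0 by simp
    have l0: "0 \<le> 1 + ln N" using ln2 ln2_ge_two_thirds by linarith
    have "(807*(real k)^2*((2::real)^k)^4)*(A^4*F^3*Qv) \<le> (c0*F)*(A^4*F^3*Qv)"
      using pb R0 by (rule mult_right_mono)
    then have "((807*(real k)^2*((2::real)^k)^4)*(A^4*F^3*Qv))*(1 + ln N) \<le> ((c0*F)*(A^4*F^3*Qv))*(3*ln N)"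
    proof (rule mm[OF _ ln1 _ l0])
      show "0 \<le> (807*(real k)^2*((2::real)^k)^4)*(A^4*F^3*Qv)" using R0 by simp
    qed
    then show ?thesis unfolding Qv_def by (simp only: mult.assoc)
  qed
  also have "\<dots> = 3 * c0 * (fact (k - 1) * A) ^ 4 * (N + lam * N\<^sup>2 + lam powr (- 2 / real k)) * ln N"
    unfolding F_def by (simp add: power_mult_distrib power4_eq_xxxx power3_eq_cube algebra_simps)
  finally have fin: "real (card S) \<le> 3 * c0 * (fact (k - 1) * A) ^ 4 * (N + lam * N\<^sup>2 + lam powr (- 2 / real k)) * ln N" .
  show "let H = \<lfloor>(A * lam) powr (- 1 / real k)\<rfloor> in
      real (card {(m::nat, n::nat). 0 < m \<and> 0 < n \<and> real m \<le> N \<and> real n \<le> N \<and>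
         (\<forall>j\<in>{1..k-1}. dist_int ((deriv ^^ j) f (real m) / fact j - (deriv ^^ j) f (real n) / fact j)
                           \<le> 2 * real_of_int H powi (- int j))})
      \<le> 3 * c0 * (fact (k - 1) * A) ^ 4 * (N + lam * N\<^sup>2 + lam powr (- 2 / real k)) * ln N"
    using fin unfolding S_def H_def M_def a_def Let_def .
qed


end
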